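(* Let $k$ be a field, $R=k[x_1,\ldots,x_n]$, and let $I$ be an almost reverse lexicographic ideal whose last generator is $M_\omega=x_1^{\omega_1}\cdots x_\mu^{\omega_\mu}$ with $\omega_\mu>0$, $\mu\ge2$. Let $1\le i\le\mu-1$. For every $\alpha\in\mathcal{I}_{i-1}$ and every $\beta\in\mathcal{I}_i$, \[|\alpha|+f_i(\alpha)\le f_i(0)\le|\beta|+f_{i+1}(\beta),\] where $0\in\mathbb{Z}^{i-1}$ is the zero tuple. In particular, if $N,M\in\mathcal{G}(I)$ with $\max N<\max M$, then $\deg N\le\deg M$.
   Context: Monomial order: degree reverse lexicographic: for $M=x^\alpha,N=x^\beta$, $M>N$ iff $\deg M>\deg N$, or degrees are equal and for the largest $s$ with $\alpha_s\neq\beta_s$ one has $\alpha_s<\beta_s$. For $\alpha\in\mathbb{Z}^s_{\ge0}$, $x^\alpha=x_1^{\alpha_1}\cdots x_s^{\alpha_s}$, $|\alpha|=\sum\alpha_j$, and $\alpha\le\beta$ iff $x^\alpha\le x^\beta$. Almost reverse lexicographic: for every monomial $M$ and every minimal monomial generator $N$ of $I$ with $\deg M=\deg N$ and $M>N$, $M\in I$. $\mathcal{G}(I)$ is the minimal monomial generating set; $\max M$ is the largest $i$ with $x_i\mid M$. The last generator $M_\omega$ is the element of $\mathcal{G}(I)$ of maximal degree that is smallest in the order among elements of $\mathcal{G}(I)$ of that degree; $\mu=\max M_\omega$. $f_1=\min\{t:x_1^t\in I\}$; for $2\le i\le\mu$, $\alpha\in\mathbb{Z}^{i-1}_{\ge0}$,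 $f_i(\alpha)=\min\{t\ge0:x^\alpha x_i^t\in I\}$. For $1\le i\le\mu-2$, $\mathcal{I}_i=\{(\alpha_1,\ldots,\alpha_i)\in\mathbb{Z}^i_{\ge0}: 0\le\alpha_1<f_1,\ 0\le\alpha_j<f_j(\alpha_1,\ldots,\alpha_{j-1})\ (2\le j\le i)\}$, and $\mathcal{I}_{\mu-1}$ is the set of $(\alpha_1,\ldots,\alpha_{\mu-1})$ satisfying these inequalities for $j\le\mu-1$ together with $(\alpha_1,\ldots,\alpha_{\mu-1})\ge(\omega_1,\ldots,\omega_{\mu-1})$. Convention: $\mathcal{I}_0$ consists of the empty tuple $0\in\mathbb{Z}^0$, with $|0|=0$ and $f_1(0)=f_1$. *)

theory Defs
  imports Main
begin

text \<open>Monomials of k[x_1,...,x_n] are identified with exponent vectors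
  a :: nat => nat supported in {1..n}; x^a = x_1^(a 1) ... x_n^(a n).
  A monomial ideal is represented by its set of monomials.\<close>

type_synonym expo = "nat \<Rightarrow> nat"

definition monomial_in :: "nat \<Rightarrow> expo \<Rightarrow> bool" where
  "monomial_in n a \<longleftrightarrow> (\<forall>j. a j \<noteq> 0 \<longrightarrow> 1 \<le> j \<and> j \<le> n)"

definition mdeg :: "expo \<Rightarrow> nat" where
  "mdeg a = (\<Sum>j\<in>{j. a j \<noteq> 0}. a j)"

definition divides_mon :: "expo \<Rightarrow> expo \<Rightarrow> bool" where
  "divides_mon a b \<longleftrightarrow> (\<forall>j. a j \<le> b j)"

definition monomial_ideal :: "nat \<Rightarrow> expo set \<Rightarrow> bool" where
  "monomial_ideal n I \<longleftrightarrow> (\<forall>a\<in>I. monomial_in n a) \<and>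
     (\<forall>a b. a \<in> I \<and> monomial_in n b \<and> divides_mon a b \<longrightarrow> b \<in> I)"

text \<open>Degree reverse lexicographic order on monomials in the variables
  x_1..x_m: revlex_less m a b means x^a < x^b.\<close>
definition revlex_less :: "nat \<Rightarrow> expo \<Rightarrow> expo \<Rightarrow> bool" where
  "revlex_less m a b \<longleftrightarrow> mdeg a < mdeg b \<or>
     (mdeg a = mdeg b \<and> (\<exists>s\<in>{1..m}. a s \<noteq> b s \<and> (\<forall>t\<in>{s<..m}. a t = b t) \<and> b s < a s))"

definition revlex_le :: "nat \<Rightarrow> expo \<Rightarrow> expo \<Rightarrow> bool" where
  "revlex_le m a b \<longleftrightarrow> a = b \<or> revlex_less m a b"

definition mingens :: "expo set \<Rightarrow> expo set" where
  "mingens I = {a \<in> I. \<forall>b\<in>I. divides_mon b a \<longrightarrow> b = a}"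

definition almost_revlex :: "nat \<Rightarrow> expo set \<Rightarrow> bool" where
  "almost_revlex n I \<longleftrightarrow> (\<forall>M N. monomial_in n M \<and> N \<in> mingens I \<and> mdeg M = mdeg N
      \<and> revlex_less n N M \<longrightarrow> M \<in> I)"

definition maxvar :: "expo \<Rightarrow> nat" where
  "maxvar a = Max {j. a j \<noteq> 0}"

definition last_generator :: "nat \<Rightarrow> expo set \<Rightarrow> expo \<Rightarrow> bool" where
  "last_generator n I \<omega> \<longleftrightarrow> \<omega> \<in> mingens I \<and> (\<forall>g\<in>mingens I. mdeg g \<le> mdeg \<omega>) \<and>
     (\<forall>g\<in>mingens I. mdeg g = mdeg \<omega> \<longrightarrow> revlex_le n \<omega> g)"

definition trunc :: "nat \<Rightarrow> expo \<Rightarrow> expo" where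
  "trunc j a = (\<lambda>k. if k < j then a k else 0)"

text \<open>f_i(alpha) = min{t. x^alpha x_i^t \<in> I} for alpha \<in> Z^{i-1}
  (alpha supported in {1..i-1}); f 1 0 = f_1.\<close>
definition fI :: "expo set \<Rightarrow> nat \<Rightarrow> expo \<Rightarrow> nat" where
  "fI I i \<alpha> = (LEAST t. \<alpha>(i := t) \<in> I)"

definition Iset :: "expo set \<Rightarrow> expo \<Rightarrow> nat \<Rightarrow> nat \<Rightarrow> expo set" where
  "Iset I \<omega> \<mu> i = {\<alpha>. (\<forall>j. \<alpha> j \<noteq> 0 \<longrightarrow> 1 \<le> j \<and> j \<le> i) \<and>
      (\<forall>j\<in>{1..i}. \<alpha> j < fI I j (trunc j \<alpha>)) \<and>
      (i = \<mu> - 1 \<longrightarrow> revlex_le (\<mu> - 1) (trunc \<mu> \<omega>) \<alpha>)}"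

end

theory Submission
  imports Defs
begin


lemma mdeg_sum: "monomial_in n a \<Longrightarrow> mdeg a = sum a {1..n}"
  unfolding mdeg_def monomial_in_def
  by (rule sum.mono_neutral_left) auto

lemma fin_supp: "monomial_in n a \<Longrightarrow> finite {j. a j \<noteq> 0}"
  unfolding monomial_in_def by (rule finite_subset[of _ "{1..n}"]) auto

lemma supp_le_max: "finite {j. a j \<noteq> 0} \<Longrightarrow> maxvar a < t \<Longrightarrow> a t = 0"
proof (rule ccontr)
  assume f: "finite {j. a j \<noteq> 0}" and lt: "maxvar a < t" and "a t \<noteq> 0"
  then have "t \<le> maxvar a" unfolding maxvar_def by (intro Max_ge) auto
  then show False using lt by simp
qed

lemma divides_zero: "divides_mon d a \<Longrightarrow> a t = 0 \<Longrightarrow> d t = 0"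
  unfolding divides_mon_def by (metis le_zero_eq)

lemma mono_upd: "monomial_in n a \<Longrightarrow> j \<in> {1..n} \<Longrightarrow> monomial_in n (a(j:=x))"
  unfolding monomial_in_def by auto

lemma mdeg_upd:
  assumes "monomial_in n a" "j \<in> {1..n}"
  shows "mdeg (a(j:=x)) + a j = mdeg a + x"
proof -
  have m: "monomial_in n (a(j:=x))" using mono_upd assms .
  have 1: "sum (a(j:=x)) {1..n} = x + sum (a(j:=x)) ({1..n}-{j})"
    using assms(2) by (subst sum.remove[of _ j]) auto
  have 2: "sum a {1..n} = a j + sum a ({1..n}-{j})"
    using assms(2) by (subst sum.remove[of _ j]) auto
  have 3: "sum (a(j:=x)) ({1..n}-{j}) = sum a ({1..n}-{j})" by (rule sum.cong) auto
  show ?thesis using mdeg_sum[OF m] mdeg_sum[OF assms(1)] 1 2 3 by simp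
qed

lemma mdeg_single: "mdeg ((\<lambda>_. 0::nat)(j:=x)) = x"
proof (cases "x = 0")
  case True then show ?thesis by (simp add: mdeg_def)
next
  case False
  then have "{k. ((\<lambda>_. 0::nat)(j:=x)) k \<noteq> 0} = {j}" by auto
  then show ?thesis by (simp add: mdeg_def)
qed

lemma divides_mono_in: "monomial_in n a \<Longrightarrow> divides_mon d a \<Longrightarrow> monomial_in n d"
  unfolding monomial_in_def divides_mon_def by (metis le_zero_eq)

lemma mdeg_divides_le: "monomial_in n a \<Longrightarrow> divides_mon d a \<Longrightarrow> mdeg d \<le> mdeg a"
proof -
  assume a: "monomial_in n a" "divides_mon d a"
  have "sum d {1..n} \<le> sum a {1..n}" using a(2) unfolding divides_mon_def by (intro sum_mono) auto
  then show ?thesis using mdeg_sum a divides_mono_in by metis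
qed

lemma mdeg_divides_less:
  assumes "monomial_in n a" "divides_mon d a" "d \<noteq> a"
  shows "mdeg d < mdeg a"
proof -
  have md: "monomial_in n d" using divides_mono_in assms by blast
  obtain j where j: "d j \<noteq> a j" using assms(3) by auto
  then have "d j < a j" using assms(2) unfolding divides_mon_def by (simp add: le_neq_implies_less)
  then have jn: "j \<in> {1..n}" using assms(1) unfolding monomial_in_def by auto
  have "sum d {1..n} < sum a {1..n}"
    by (rule sum_strict_mono_ex1) (use assms(2) jn \<open>d j < a j\<close> in \<open>auto simp: divides_mon_def\<close>)
  then show ?thesis using mdeg_sum md assms(1) by simp
qed

lemma mdeg_pos: "monomial_in n a \<Longrightarrow> a \<noteq> (\<lambda>_. 0) \<Longrightarrow> 0 < mdeg a"
proof -
  assume a: "monomial_in n a" "a \<noteq> (\<lambda>_. 0)"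
  have "divides_mon (\<lambda>_. 0) a" unfolding divides_mon_def by simp
  then have "mdeg (\<lambda>_. 0) < mdeg a" using mdeg_divides_less[OF a(1) _ ] a(2) by metis
  then show ?thesis by simp
qed

lemma divides_trans: "divides_mon a b \<Longrightarrow> divides_mon b c \<Longrightarrow> divides_mon a c"
  unfolding divides_mon_def using le_trans by blast

lemma divisor_deg:
  "monomial_in n a \<Longrightarrow> k \<le> mdeg a \<Longrightarrow> \<exists>d. divides_mon d a \<and> mdeg d = k"
proof (induction "mdeg a - k" arbitrary: a)
  case 0
  then show ?case by (intro exI[of _ a]) (auto simp: divides_mon_def)
next
  case (Suc m)
  have "mdeg (\<lambda>_::nat. 0::nat) = 0" by (simp add: mdeg_def)
  then have "a \<noteq> (\<lambda>_. 0)" using Suc.hyps(2) by (metis zero_diff nat.distinct(1))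
  then obtain j where j: "a j \<noteq> 0" by auto
  then have jn: "j \<in> {1..n}" using Suc.prems unfolding monomial_in_def by auto
  define a' where "a' = a(j := a j - 1)"
  have ma: "monomial_in n a'" unfolding a'_def using mono_upd Suc.prems jn by blast
  have "mdeg a' + a j = mdeg a + (a j - 1)" unfolding a'_def using mdeg_upd Suc.prems jn by blast
  then have dg: "mdeg a' = mdeg a - 1" using j by simp
  obtain d where d: "divides_mon d a'" "mdeg d = k"
  proof -
    have "m = mdeg a' - k" "k \<le> mdeg a'" using Suc.hyps(2) dg by linarith+
    then show ?thesis using Suc.hyps(1)[of a'] ma that by blast
  qed
  have "divides_mon a' a" unfolding a'_def divides_mon_def by auto
  then show ?case using d divides_trans by blast
qed

lemma exists_mingen_aux:
  assumes "monomial_ideal n I"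
  shows "\<forall>a. mdeg a = m \<longrightarrow> a \<in> I \<longrightarrow> (\<exists>N\<in>mingens I. divides_mon N a)"
proof (induction m rule: less_induct)
  case (less m)
  show ?case
  proof (intro allI impI)
    fix a assume am: "mdeg a = m" "a \<in> I"
    show "\<exists>N\<in>mingens I. divides_mon N a"
    proof (cases "a \<in> mingens I")
      case True then show ?thesis by (intro bexI[of _ a]) (auto simp: divides_mon_def)
    next
      case False
      then obtain b where b: "b \<in> I" "divides_mon b a" "b \<noteq> a" using am(2)
        unfolding mingens_def by blast
      have "monomial_in n a" using assms(1) am(2) unfolding monomial_ideal_def by blast
      then have "mdeg b < m" using mdeg_divides_less b am(1) by blast
      then obtain N where N: "N \<in> mingens I" "divides_mon N b"
        using less[of "mdeg b"] b(1) by blast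
      show ?thesis using N b(2) divides_trans by blast
    qed
  qed
qed

lemma exists_mingen:
  assumes "monomial_ideal n I" "a \<in> I"
  shows "\<exists>N\<in>mingens I. divides_mon N a"
  using exists_mingen_aux[OF assms(1)] assms(2) by blast

lemma G:
  assumes "almost_revlex n I" "N \<in> mingens I" "monomial_in n \<delta>" "mdeg \<delta> = mdeg N"
    "s \<in> {1..n}" "\<delta> s < N s" "\<forall>t\<in>{s<..n}. \<delta> t = N t"
  shows "\<delta> \<in> I"
proof -
  have "revlex_less n N \<delta>" unfolding revlex_less_def
    using assms(4-7) by (intro disjI2 conjI bexI[of _ s]) auto
  then show ?thesis using assms(1-4) unfolding almost_revlex_def by blast
qed

lemma G2:
  assumes "monomial_ideal n I" "almost_revlex n I" "N \<in> mingens I" "monomial_in n \<gamma>"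
    "mdeg N \<le> mdeg \<gamma>" "s \<in> {1..n}" "\<gamma> s < N s" "\<forall>t. s < t \<longrightarrow> \<gamma> t = 0"
    "\<forall>t. s < t \<longrightarrow> N t = 0"
  shows "\<gamma> \<in> I"
proof -
  obtain \<delta> where d: "divides_mon \<delta> \<gamma>" "mdeg \<delta> = mdeg N"
    using divisor_deg assms(4,5) by blast
  have md: "monomial_in n \<delta>" using divides_mono_in assms(4) d by blast
  have "\<delta> s < N s" using d(1) assms(7) unfolding divides_mon_def using le_less_trans by blast
  moreover have "\<forall>t\<in>{s<..n}. \<delta> t = N t"
  proof
    fix t assume "t \<in> {s<..n}"
    then have "s < t" by simp
    then have "\<gamma> t = 0" "N t = 0" using assms(8,9) by auto
    moreover have "\<delta> t \<le> \<gamma> t" using d(1) unfolding divides_mon_def by blast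
    ultimately show "\<delta> t = N t" by simp
  qed
  ultimately have "\<delta> \<in> I" using G[OF assms(2,3) md d(2) assms(6)] by blast
  then show ?thesis using assms(1,4) d(1) unfolding monomial_ideal_def by blast
qed

lemma notin:
  assumes "\<forall>k. \<alpha> k \<noteq> 0 \<longrightarrow> 1 \<le> k \<and> k \<le> j" "\<alpha> j < fI I j (trunc j \<alpha>)"
  shows "\<alpha> \<notin> I"
proof -
  have "(trunc j \<alpha>)(j := \<alpha> j) = \<alpha>" unfolding trunc_def
  proof (intro ext)
    fix x show "((\<lambda>k. if k < j then \<alpha> k else 0)(j := \<alpha> j)) x = \<alpha> x"
      using assms(1)[rule_format, of x] by (cases "x < j"; cases "x = j") auto
  qed
  moreover have "(trunc j \<alpha>)(j := \<alpha> j) \<notin> I"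
    using not_less_Least[OF assms(2)[unfolded fI_def]] .
  ultimately show ?thesis by simp
qed



theorem corollary2p13:
  fixes n \<mu> i :: nat and I :: "expo set" and \<omega> :: expo
  assumes "monomial_ideal n I"
    and "almost_revlex n I"
    and "last_generator n I \<omega>"
    and "\<mu> = maxvar \<omega>"
    and "\<omega> \<mu> > 0"
    and "\<mu> \<ge> 2"
    and "1 \<le> i" and "i \<le> \<mu> - 1"
  shows "(\<forall>\<alpha>\<in>Iset I \<omega> \<mu> (i - 1). \<forall>\<beta>\<in>Iset I \<omega> \<mu> i.
            mdeg \<alpha> + fI I i \<alpha> \<le> fI I i (\<lambda>_. 0) \<and>
            fI I i (\<lambda>_. 0) \<le> mdeg \<beta> + fI I (i + 1) \<beta>)
      \<and> (\<forall>N\<in>mingens I. \<forall>M\<in>mingens I. maxvar N < maxvar M \<longrightarrow> mdeg N \<le> mdeg M)"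
proof -
  have Imon: "\<And>a. a \<in> I \<Longrightarrow> monomial_in n a" using assms(1) unfolding monomial_ideal_def by blast
  have Iup: "\<And>a b. a \<in> I \<Longrightarrow> monomial_in n b \<Longrightarrow> divides_mon a b \<Longrightarrow> b \<in> I"
    using assms(1) unfolding monomial_ideal_def by blast
  have mgI: "\<And>a. a \<in> mingens I \<Longrightarrow> a \<in> I" unfolding mingens_def by blast
  have mgmin: "\<And>a b. a \<in> mingens I \<Longrightarrow> b \<in> I \<Longrightarrow> divides_mon b a \<Longrightarrow> b = a"
    unfolding mingens_def by blast
  have zero_div: "\<And>a. divides_mon (\<lambda>_. 0) a" unfolding divides_mon_def by simp
  have part2: "\<forall>N\<in>mingens I. \<forall>M\<in>mingens I. maxvar N < maxvar M \<longrightarrow> mdeg N \<le> mdeg M"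
  proof (intro ballI impI)
    fix N M assume N: "N \<in> mingens I" and M: "M \<in> mingens I" and lt: "maxvar N < maxvar M"
    have mN: "monomial_in n N" and mM: "monomial_in n M" using N M mgI Imon by auto
    have finN: "finite {j. N j \<noteq> 0}" using fin_supp[OF mN] .
    have finM: "finite {j. M j \<noteq> 0}" using fin_supp[OF mM] .
    have Mnz: "M \<noteq> (\<lambda>_. 0)"
    proof
      assume "M = (\<lambda>_. 0)"
      then have "divides_mon M N" using zero_div by simp
      then have "M = N" using mgmin[OF N mgI[OF M]] by blast
      then show False using lt by simp
    qed
    then have "{j. M j \<noteq> 0} \<noteq> {}" by auto
    then have mm: "maxvar M \<in> {j. M j \<noteq> 0}" unfolding maxvar_def by (rule Max_in[OF finM])
    then have Mm0: "M (maxvar M) \<noteq> 0" by simp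
    then have Mm: "M (maxvar M) > 0" by simp
    have mn: "maxvar M \<in> {1..n}" using mM[unfolded monomial_in_def, rule_format, OF Mm0] by simp
    have Mz: "\<And>t. maxvar M < t \<Longrightarrow> M t = 0" using supp_le_max[OF finM] by blast
    have Nz: "\<And>t. maxvar M \<le> t \<Longrightarrow> N t = 0"
    proof -
      fix t assume "maxvar M \<le> t" then have "maxvar N < t" using lt by simp
      then show "N t = 0" using supp_le_max[OF finN] by blast
    qed
    show "mdeg N \<le> mdeg M"
    proof (rule ccontr)
      assume "\<not> mdeg N \<le> mdeg M"
      then have gt: "mdeg M < mdeg N" by simp
      obtain \<delta> where d: "divides_mon \<delta> N" "mdeg \<delta> = mdeg M"
        using divisor_deg[OF mN, of "mdeg M"] gt by auto
      have md: "monomial_in n \<delta>" using divides_mono_in mN d(1) by blast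
      have dz: "\<And>t. maxvar M \<le> t \<Longrightarrow> \<delta> t = 0" using d(1) Nz divides_zero by blast
      have "\<delta> \<in> I"
      proof (rule G[OF assms(2) M md d(2) mn])
        show "\<delta> (maxvar M) < M (maxvar M)" using dz[of "maxvar M"] Mm by simp
        show "\<forall>t\<in>{maxvar M<..n}. \<delta> t = M t"
        proof
          fix t assume "t \<in> {maxvar M<..n}"
          then have "maxvar M < t" by simp
          then show "\<delta> t = M t" using dz[of t] Mz[of t] by simp
        qed
      qed
      then have "\<delta> = N" using mgmin[OF N] d(1) by blast
      then show False using d(2) gt by simp
    qed
  qed
  have omI: "\<omega> \<in> mingens I" using assms(3) unfolding last_generator_def by blast
  have omM: "monomial_in n \<omega>" using omI mgI Imon by blast
  have fin: "finite {j. \<omega> j \<noteq> 0}" using fin_supp[OF omM] .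
  have mun: "\<mu> \<in> {1..n}" using omM assms(5) unfolding monomial_in_def by auto
  have omz: "\<And>t. \<mu> < t \<Longrightarrow> \<omega> t = 0"
    using supp_le_max[OF fin] assms(4) by blast
  have iless: "i < \<mu>" "i \<in> {1..n}" "Suc i \<in> {1..n}" using assms(6-8) mun by auto
  have key_om: "\<And>\<gamma>. monomial_in n \<gamma> \<Longrightarrow> mdeg \<omega> \<le> mdeg \<gamma> \<Longrightarrow> \<gamma> \<mu> < \<omega> \<mu> \<Longrightarrow>
      \<forall>t. \<mu> < t \<longrightarrow> \<gamma> t = 0 \<Longrightarrow> \<gamma> \<in> I"
    using G2[OF assms(1,2) omI _ _ mun] omz by blast
  define d where "d = fI I i (\<lambda>_. 0)"
  have ex_d: "(\<lambda>_. 0)(i := mdeg \<omega>) \<in> I"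
    by (rule key_om) (use iless assms(5) mono_upd[of n "\<lambda>_. 0" i] mdeg_single in \<open>auto simp: monomial_in_def\<close>)
  have dI: "(\<lambda>_. 0)(i := d) \<in> I" unfolding d_def fI_def by (rule LeastI[where P="\<lambda>t. (\<lambda>_. 0)(i := t) \<in> I", OF ex_d])
  have d_le: "\<And>t. (\<lambda>_. 0)(i := t) \<in> I \<Longrightarrow> d \<le> t" unfolding d_def fI_def by (rule Least_le)
  have dmin: "(\<lambda>_. 0)(i := d) \<in> mingens I"
    unfolding mingens_def
  proof (intro CollectI conjI ballI impI dI)
    fix b assume b: "b \<in> I" "divides_mon b ((\<lambda>_. 0)(i := d))"
    have beq: "b = (\<lambda>_. 0)(i := b i)"
    proof
      fix k show "b k = ((\<lambda>_. 0)(i := b i)) k"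
        using b(2)[unfolded divides_mon_def, rule_format, of k] by (cases "k = i") auto
    qed
    have "(\<lambda>_. 0)(i := b i) \<in> I" using b(1) beq by simp
    then have "d \<le> b i" by (rule d_le)
    moreover have "b i \<le> d" using b(2)[unfolded divides_mon_def, rule_format, of i] by simp
    ultimately show "b = (\<lambda>_. 0)(i := d)" using beq by simp
  qed
  have part1: "\<forall>\<alpha>\<in>Iset I \<omega> \<mu> (i - 1). mdeg \<alpha> + fI I i \<alpha> \<le> d"
  proof
    fix \<alpha> assume a: "\<alpha> \<in> Iset I \<omega> \<mu> (i - 1)"
    have asupp: "\<forall>j. \<alpha> j \<noteq> 0 \<longrightarrow> 1 \<le> j \<and> j \<le> i - 1" using a unfolding Iset_def by blast
    have ma: "monomial_in n \<alpha>" unfolding monomial_in_def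
    proof (intro allI impI)
      fix j assume "\<alpha> j \<noteq> 0" then show "1 \<le> j \<and> j \<le> n" using asupp[rule_format, of j] iless by auto
    qed
    have az: "\<And>t. i \<le> t \<Longrightarrow> \<alpha> t = 0"
    proof -
      fix t assume "i \<le> t" then show "\<alpha> t = 0" using asupp[rule_format, of t] assms(7)
        by (cases "\<alpha> t = 0") auto
    qed
    show "mdeg \<alpha> + fI I i \<alpha> \<le> d"
    proof (cases "mdeg \<alpha> \<le> d")
      case True
      define \<gamma> where "\<gamma> = \<alpha>(i := d - mdeg \<alpha>)"
      have mg: "monomial_in n \<gamma>" unfolding \<gamma>_def using mono_upd ma iless by blast
      have dg: "mdeg \<gamma> = d" using mdeg_upd[OF ma iless(2), of "d - mdeg \<alpha>"] az[of i] True
        unfolding \<gamma>_def by simp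
      have "\<gamma> \<in> I"
      proof (cases "\<alpha> = (\<lambda>_. 0)")
        case True then show ?thesis using dI unfolding \<gamma>_def by (simp add: mdeg_def)
      next
        case False
        then have "0 < mdeg \<alpha>" using mdeg_pos ma by blast
        then have "\<gamma> i < ((\<lambda>_. 0)(i := d)) i" unfolding \<gamma>_def using True by simp
        moreover have "\<forall>t\<in>{i<..n}. \<gamma> t = ((\<lambda>_. 0)(i := d)) t" unfolding \<gamma>_def using az by auto
        moreover have "mdeg \<gamma> = mdeg ((\<lambda>_. 0)(i := d))" using dg mdeg_single by simp
        ultimately show ?thesis using G[OF assms(2) dmin mg _ iless(2)] by blast
      qed
      then have "fI I i \<alpha> \<le> d - mdeg \<alpha>" unfolding fI_def \<gamma>_def by (rule Least_le)
      then show ?thesis using True by simp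
    next
      case False
      have "i \<noteq> 1"
      proof
        assume i1: "i = 1"
        have "\<alpha> = (\<lambda>_. 0)"
        proof
          fix t show "\<alpha> t = 0" using az[of t] asupp[rule_format, of t] i1
            by (cases "\<alpha> t = 0") auto
        qed
        then show False using False by (simp add: mdeg_def)
      qed
      then have i2: "2 \<le> i" using assms(7) by simp
      have notI: "\<alpha> \<notin> I"
      proof (rule notin)
        show "\<forall>k. \<alpha> k \<noteq> 0 \<longrightarrow> 1 \<le> k \<and> k \<le> i - 1" using asupp .
        show "\<alpha> (i - 1) < fI I (i - 1) (trunc (i - 1) \<alpha>)" using a i2 unfolding Iset_def by auto
      qed
      have "\<alpha> \<in> I"
      proof (cases "d = 0")
        case True
        moreover have "(\<lambda>_. 0::nat)(i:=0) = (\<lambda>_. 0)" by (rule ext) simp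
        ultimately have "(\<lambda>_. 0::nat) \<in> I" using dI by simp
        then show ?thesis using Iup[OF _ ma zero_div] by blast
      next
        case False2: False
        show ?thesis
          by (rule G2[OF assms(1,2) dmin ma _ iless(2)]) (use False False2 az mdeg_single in auto)
      qed
      then show ?thesis using notI by blast
    qed
  qed
  have part1b: "\<forall>\<beta>\<in>Iset I \<omega> \<mu> i. d \<le> mdeg \<beta> + fI I (i + 1) \<beta>"
  proof
    fix \<beta> assume b: "\<beta> \<in> Iset I \<omega> \<mu> i"
    have bsupp: "\<forall>j. \<beta> j \<noteq> 0 \<longrightarrow> 1 \<le> j \<and> j \<le> i" using b unfolding Iset_def by blast
    have mb: "monomial_in n \<beta>" unfolding monomial_in_def
    proof (intro allI impI)
      fix j assume "\<beta> j \<noteq> 0" then show "1 \<le> j \<and> j \<le> n" using bsupp[rule_format, of j] iless by auto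
    qed
    have bz: "\<And>t. i < t \<Longrightarrow> \<beta> t = 0"
    proof -
      fix t assume "i < t" then show "\<beta> t = 0" using bsupp[rule_format, of t]
        by (cases "\<beta> t = 0") auto
    qed
    have notI: "\<beta> \<notin> I"
    proof (rule notin)
      show "\<forall>k. \<beta> k \<noteq> 0 \<longrightarrow> 1 \<le> k \<and> k \<le> i" using bsupp .
      show "\<beta> i < fI I i (trunc i \<beta>)" using b assms(7) unfolding Iset_def by auto
    qed
    have degupd: "\<And>t. mdeg (\<beta>(Suc i := t)) = mdeg \<beta> + t"
      using mdeg_upd[OF mb iless(3)] bz[of "Suc i"] by simp
    have ex: "\<exists>t. \<beta>(Suc i := t) \<in> I"
    proof (cases "Suc i < \<mu>")
      case True
      have "\<beta>(Suc i := mdeg \<omega>) \<in> I"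
        by (rule key_om) (use True degupd mono_upd[OF mb iless(3)] bz assms(5) in auto)
      then show ?thesis by blast
    next
      case False
      then have ieq: "Suc i = \<mu>" using iless by simp
      then have rl: "revlex_le (\<mu> - 1) (trunc \<mu> \<omega>) \<beta>" using b unfolding Iset_def by auto
      define \<omega>' where "\<omega>' = trunc \<mu> \<omega>"
      have mo': "monomial_in n \<omega>'" using omM unfolding \<omega>'_def trunc_def monomial_in_def by auto
      have oeq: "\<omega> = \<omega>'(\<mu> := \<omega> \<mu>)" unfolding \<omega>'_def trunc_def
        using omz by (intro ext) (simp add: not_less_iff_gr_or_eq)
      have dego: "mdeg \<omega> = mdeg \<omega>' + \<omega> \<mu>"
        using mdeg_upd[OF mo' mun, of "\<omega> \<mu>"] oeq unfolding \<omega>'_def trunc_def by simp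
      show ?thesis
      proof (cases "mdeg \<omega>' < mdeg \<beta>")
        case True
        have "\<beta>(Suc i := \<omega> \<mu> - 1) \<in> I"
          by (rule key_om) (use True degupd mono_upd[OF mb iless(3)] bz ieq dego assms(5) in auto)
        then show ?thesis by blast
      next
        case False
        show ?thesis
        proof (cases "\<omega>' = \<beta>")
          case True
          then have "\<beta>(Suc i := \<omega> \<mu>) = \<omega>" using oeq ieq by simp
          then have "\<beta>(Suc i := \<omega> \<mu>) \<in> I" using mgI[OF omI] by simp
          then show ?thesis by blast
        next
          case False2: False
          then have "revlex_less (\<mu> - 1) \<omega>' \<beta>" using rl unfolding revlex_le_def \<omega>'_def by blast
          then have eqd: "mdeg \<omega>' = mdeg \<beta>" and
            "\<exists>s\<in>{1..\<mu> - 1}. \<omega>' s \<noteq> \<beta> s \<and> (\<forall>t\<in>{s<..\<mu> - 1}. \<omega>' t = \<beta> t) \<and> \<beta> s < \<omega>' s"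
            using False unfolding revlex_less_def by auto
          then obtain s where s: "s \<in> {1..\<mu> - 1}" "\<forall>t\<in>{s<..\<mu> - 1}. \<omega>' t = \<beta> t" "\<beta> s < \<omega>' s"
            by blast
          define \<gamma> where "\<gamma> = \<beta>(Suc i := \<omega> \<mu>)"
          have "\<gamma> \<in> I"
          proof (rule G[OF assms(2) omI])
            show "monomial_in n \<gamma>" unfolding \<gamma>_def using mono_upd[OF mb iless(3)] .
            show "mdeg \<gamma> = mdeg \<omega>" unfolding \<gamma>_def using degupd eqd dego by simp
            show "s \<in> {1..n}" using s(1) mun by auto
            show "\<gamma> s < \<omega> s" unfolding \<gamma>_def using s(1,3) ieq unfolding \<omega>'_def trunc_def
              by (auto split: if_splits)
            show "\<forall>t\<in>{s<..n}. \<gamma> t = \<omega> t"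
            proof
              fix t assume t: "t \<in> {s<..n}"
              show "\<gamma> t = \<omega> t"
              proof (cases "t < \<mu>")
                case True then have "\<omega>' t = \<beta> t" using s(2) t by auto
                then show ?thesis unfolding \<gamma>_def \<omega>'_def trunc_def using True ieq by auto
              next
                case False
                then show ?thesis unfolding \<gamma>_def using ieq omz bz
                  by (cases "t = \<mu>") auto
              qed
            qed
          qed
          then show ?thesis unfolding \<gamma>_def by blast
        qed
      qed
    qed
    define e where "e = fI I (i + 1) \<beta>"
    have gI: "\<beta>(Suc i := e) \<in> I" unfolding e_def fI_def using ex LeastI_ex by simp
    show "d \<le> mdeg \<beta> + fI I (i + 1) \<beta>"
    proof (rule ccontr)
      assume "\<not> d \<le> mdeg \<beta> + fI I (i + 1) \<beta>"
      then have lt: "mdeg \<beta> + e < d" unfolding e_def by simp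
      obtain N where N: "N \<in> mingens I" "divides_mon N (\<beta>(Suc i := e))"
        using exists_mingen[OF assms(1) gI] by blast
      have mg: "monomial_in n (\<beta>(Suc i := e))" using mono_upd[OF mb iless(3)] .
      have degN: "mdeg N \<le> mdeg \<beta> + e" using mdeg_divides_le[OF mg N(2)] degupd by simp
      have Nz: "\<And>t. Suc i < t \<Longrightarrow> N t = 0"
      proof -
        fix t assume t: "Suc i < t"
        then have "(\<beta>(Suc i := e)) t = 0" using bz by simp
        then show "N t = 0" using divides_zero[OF N(2)] by blast
      qed
      have Npos: "N (Suc i) > 0"
      proof (rule ccontr)
        assume "\<not> N (Suc i) > 0"
        have "divides_mon N \<beta>" unfolding divides_mon_def
        proof
          fix j show "N j \<le> \<beta> j"
          proof (cases "j = Suc i")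
            case True then show ?thesis using \<open>\<not> N (Suc i) > 0\<close> by simp
          next
            case False then show ?thesis using N(2)[unfolded divides_mon_def, rule_format, of j] by simp
          qed
        qed
        then show False using Iup[OF mgI[OF N(1)] mb] notI by blast
      qed
      have "(\<lambda>_. 0)(i := mdeg N) \<in> I"
      proof (rule G[OF assms(2) N(1)])
        show "monomial_in n ((\<lambda>_. 0)(i := mdeg N))" using iless unfolding monomial_in_def by auto
        show "mdeg ((\<lambda>_. 0)(i := mdeg N)) = mdeg N" by (rule mdeg_single)
        show "Suc i \<in> {1..n}" by (rule iless(3))
        show "((\<lambda>_. 0)(i := mdeg N)) (Suc i) < N (Suc i)" using Npos by simp
        show "\<forall>t\<in>{Suc i<..n}. ((\<lambda>_. 0)(i := mdeg N)) t = N t" using Nz by auto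
      qed
      then have "d \<le> mdeg N" by (rule d_le)
      then show False using degN lt by simp
    qed
  qed
  show ?thesis using part1 part1b part2 unfolding d_def by auto
qed

end
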